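(* Suppose Assumption A holds, $x^\star$ is the weak-Minty solution of A(d), and (VrFRBS) uses estimators $\widetilde S^k$ in class (B) with parameter $\tau\in(0,1]$. For constants $\gamma,c_1>0$ define, with the convention $y^{-1}:=x^0$, $$\mathcal Q_k:=\|y^k-x^\star\|^2+(1-\gamma\eta)\|y^k-x^{k-1}\|^2+\tfrac{2\eta}{c_1\tau}\|x^{k-1}-y^{k-1}\|^2+\tfrac{2\eta(1-\tau)}{\tau}\langle e^{k-1},x^\star-y^{k-1}\rangle .$$ Then for all positive $\gamma,c,c_1,c_2$ and all $k\ge0$, almost surely $$\begin{aligned}\mathbb E_k[\mathcal Q_{k+1}]\le{}&\mathcal Q_k-\Big[1-\tfrac{2\eta}{c_1\tau}-\tfrac{4\rho}{\eta}-\tfrac2{c_2}-2L^2\eta\big(c+4\rho+\tfrac1\gamma+\tfrac{2\eta}{c_2}\big)\Big]\|y^k-x^k\|^2\\&-\Big\{1-\gamma\eta-\Big[\tfrac{2\eta}{c_1\tau}+2L^2\eta\big(c+4\rho+\tfrac1\gamma+\tfrac{2\eta}{c_2}\big)\Big]\Big\}\|y^k-x^{k-1}\|^2-cL^2\eta\|x^k-x^{k-1}\|^2+\eta\big(2\eta+\tfrac{c_1}{\tau}+c_2\eta\big)\mathbb E_k\|e^k\|^2,\end{aligned}$$ and moreover, for all $k\ge0$, $$\mathcal Q_k\ge\tfrac34\|y^k-x^\star\|^2+\tfrac{1-2\gamma\eta}{2}\|y^k-x^{k-1}\|^2+\big(\tfrac{2\eta}{c_1\tau}-\tfrac12\big)\|x^{k-1}-y^{k-1}\|^2-\tfrac{8(1-\tau)^2\eta^2}{\tau^2}\|e^{k-1}\|^2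 .$$
   Context: Setting: $G:\mathbb{R}^p\to\mathbb{R}^p$, $T:\mathbb{R}^p\rightrightarrows\mathbb{R}^p$, $\Phi:=G+T$, $\mathrm{zer}\,\Phi:=\{x:0\in Gx+Tx\}$, $J_{\eta T}:=(\mathbb{I}+\eta T)^{-1}$; (E) $Gx=\mathbb{E}_{\zeta\sim\mathbb P}[\mathbf G(x,\zeta)]$ or (F) $Gx=\frac1n\sum_{i=1}^nG_ix$. Assumption A: (a) $\mathrm{zer}\,\Phi\neq\emptyset$; (b) in (E), $\mathbb{E}_\zeta\|\mathbf G(x,\zeta)-Gx\|^2\le\sigma^2$; (c) in (E), $\mathbb{E}_\zeta\|\mathbf G(x,\zeta)-\mathbf G(y,\zeta)\|^2\le L^2\|x-y\|^2$, in (F), $\frac1n\sum_i\|G_ix-G_iy\|^2\le L^2\|x-y\|^2$ (so $G$ is $L$-Lipschitz); (d) there exist $\rho\ge0$ and $x^\star\in\mathrm{zer}\,\Phi$ with $\langle Gx+v,x-x^\star\rangle\ge-\rho\|Gx+v\|^2$ for all $(x,v)\in\mathrm{gra}\,T$. Scheme (VrFRBS): stepsize $\eta>0$, $x^0$, $x^{-2}=x^{-1}=x^0$, $\xi^0\in Tx^0$; for $k\ge0$: $S^k:=2Gx^k-Gx^{k-1}$, estimator $\widetilde S^k$, $x^{k+1}\in J_{\eta T}(x^k-\eta\widetilde S^k)$, $\xi^{k+1}:=\eta^{-1}(x^k-\eta\widetilde S^k-x^{k+1})\in Tx^{k+1}$. Notation: $e^k:=\widetilde S^k-S^k$, $w^k:=Gx^k+\xi^k$,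 $\hat w^k:=Gx^{k-1}+\xi^k$, $y^k:=x^k+\eta\hat w^k$. $\mathcal F_k$: $\sigma$-algebra of all randomness up to iteration $k$ (so $x^j,\xi^j,y^j$, $j\le k$, and $e^{k-1}$ are $\mathcal F_k$-measurable); $\mathbb E_k[\cdot]:=\mathbb E[\cdot\mid\mathcal F_k]$. Class (B): there exist nonnegative random variables $\Delta_k$ ($\Delta_{-1}:=0$), $\tau,\kappa\in(0,1]$, $\Theta,\hat\Theta\ge0$, nonnegative $\{\delta_k\}$ such that with $e^{-1}:=0$, a.s. for all $k\ge0$: $\mathbb E_k[e^k]=(1-\tau)e^{k-1}$; $\mathbb E_k\|e^k\|^2\le\mathbb E_k[\Delta_k]$; $\mathbb E_k[\Delta_k]\le(1-\kappa)\Delta_{k-1}+\Theta\|x^k-x^{k-1}\|^2+\hat\Theta\|x^{k-1}-x^{k-2}\|^2+\delta_k$. *)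

theory Defs
  imports "HOL-Probability.Probability"
begin

text \<open>Vectors in R^p are modelled as real^'n (p = CARD('n)). A set-valued operator
 T : R^p => 2^(R^p) is a function to sets; its graph is {(x,v). v in T x}.\<close>

definition zer :: "(real^'n \<Rightarrow> real^'n) \<Rightarrow> (real^'n \<Rightarrow> (real^'n) set) \<Rightarrow> (real^'n) set" where
  "zer G T = {x. \<exists>v \<in> T x. G x + v = 0}"

definition resolvent :: "real \<Rightarrow> (real^'n \<Rightarrow> (real^'n) set) \<Rightarrow> real^'n \<Rightarrow> (real^'n) set" where
  "resolvent \<eta> T z = {u. \<exists>v \<in> T u. z = u + \<eta> *\<^sub>R v}"

definition weak_minty :: "(real^'n \<Rightarrow> real^'n) \<Rightarrow> (real^'n \<Rightarrow> (real^'n) set) \<Rightarrow> real \<Rightarrow> real^'n \<Rightarrow> bool" where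
  "weak_minty G T \<rho> xs \<longleftrightarrow> \<rho> \<ge> 0 \<and> xs \<in> zer G T \<and>
     (\<forall>x v. v \<in> T x \<longrightarrow> inner (G x + v) (x - xs) \<ge> - \<rho> * (norm (G x + v))\<^sup>2)"

definition assumptionA_E :: "'z measure \<Rightarrow> (real^'n \<Rightarrow> 'z \<Rightarrow> real^'n) \<Rightarrow> (real^'n \<Rightarrow> real^'n)
     \<Rightarrow> real \<Rightarrow> real \<Rightarrow> bool" where
  "assumptionA_E P Gs G \<sigma> L \<longleftrightarrow> prob_space P \<and>
     (\<forall>x. integrable P (Gs x) \<and> G x = (\<integral>\<zeta>. Gs x \<zeta> \<partial>P)) \<and>
     (\<forall>x. (\<integral>\<^sup>+\<zeta>. ennreal ((norm (Gs x \<zeta> - G x))\<^sup>2) \<partial>P) \<le> ennreal (\<sigma>\<^sup>2)) \<and>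
     (\<forall>x y. (\<integral>\<^sup>+\<zeta>. ennreal ((norm (Gs x \<zeta> - Gs y \<zeta>))\<^sup>2) \<partial>P) \<le> ennreal (L\<^sup>2 * (norm (x - y))\<^sup>2))"

definition assumptionA_F :: "nat \<Rightarrow> (nat \<Rightarrow> real^'n \<Rightarrow> real^'n) \<Rightarrow> (real^'n \<Rightarrow> real^'n) \<Rightarrow> real \<Rightarrow> bool" where
  "assumptionA_F n Gi G L \<longleftrightarrow> n \<ge> 1 \<and>
     (\<forall>x. G x = (1 / real n) *\<^sub>R (\<Sum>i = 1..n. Gi i x)) \<and>
     (\<forall>x y. (1 / real n) * (\<Sum>i = 1..n. (norm (Gi i x - Gi i y))\<^sup>2) \<le> L\<^sup>2 * (norm (x - y))\<^sup>2)"

text \<open>Iterates are indexed by nat; since natural subtraction truncates, x (k-1) and x (k-2)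
 at k = 0, 1 realise the convention x^{-2} = x^{-1} = x^0.\<close>

definition Sk :: "(real^'n \<Rightarrow> real^'n) \<Rightarrow> (nat \<Rightarrow> 'w \<Rightarrow> real^'n) \<Rightarrow> nat \<Rightarrow> 'w \<Rightarrow> real^'n" where
  "Sk G x k \<omega> = 2 *\<^sub>R G (x k \<omega>) - G (x (k - 1) \<omega>)"

definition errk :: "(real^'n \<Rightarrow> real^'n) \<Rightarrow> (nat \<Rightarrow> 'w \<Rightarrow> real^'n) \<Rightarrow> (nat \<Rightarrow> 'w \<Rightarrow> real^'n)
     \<Rightarrow> nat \<Rightarrow> 'w \<Rightarrow> real^'n" where
  "errk G x St k \<omega> = St k \<omega> - Sk G x k \<omega>"

definition errprev :: "(real^'n \<Rightarrow> real^'n) \<Rightarrow> (nat \<Rightarrow> 'w \<Rightarrow> real^'n) \<Rightarrow> (nat \<Rightarrow> 'w \<Rightarrow> real^'n)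
     \<Rightarrow> nat \<Rightarrow> 'w \<Rightarrow> real^'n" where
  "errprev G x St k \<omega> = (if k = 0 then 0 else errk G x St (k - 1) \<omega>)"

definition yk :: "(real^'n \<Rightarrow> real^'n) \<Rightarrow> real \<Rightarrow> (nat \<Rightarrow> 'w \<Rightarrow> real^'n) \<Rightarrow> (nat \<Rightarrow> 'w \<Rightarrow> real^'n)
     \<Rightarrow> nat \<Rightarrow> 'w \<Rightarrow> real^'n" where
  "yk G \<eta> x \<xi> k \<omega> = x k \<omega> + \<eta> *\<^sub>R (G (x (k - 1) \<omega>) + \<xi> k \<omega>)"

definition yprev :: "(real^'n \<Rightarrow> real^'n) \<Rightarrow> real \<Rightarrow> (nat \<Rightarrow> 'w \<Rightarrow> real^'n) \<Rightarrow> (nat \<Rightarrow> 'w \<Rightarrow> real^'n)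
     \<Rightarrow> nat \<Rightarrow> 'w \<Rightarrow> real^'n" where
  "yprev G \<eta> x \<xi> k \<omega> = (if k = 0 then x 0 \<omega> else yk G \<eta> x \<xi> (k - 1) \<omega>)"

definition Qk :: "(real^'n \<Rightarrow> real^'n) \<Rightarrow> real \<Rightarrow> real \<Rightarrow> real \<Rightarrow> real \<Rightarrow> real^'n
     \<Rightarrow> (nat \<Rightarrow> 'w \<Rightarrow> real^'n) \<Rightarrow> (nat \<Rightarrow> 'w \<Rightarrow> real^'n) \<Rightarrow> (nat \<Rightarrow> 'w \<Rightarrow> real^'n)
     \<Rightarrow> nat \<Rightarrow> 'w \<Rightarrow> real" where
  "Qk G \<eta> \<tau> \<gamma> c1 xs x \<xi> St k \<omega> =
     (norm (yk G \<eta> x \<xi> k \<omega> - xs))\<^sup>2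
     + (1 - \<gamma> * \<eta>) * (norm (yk G \<eta> x \<xi> k \<omega> - x (k - 1) \<omega>))\<^sup>2
     + (2 * \<eta> / (c1 * \<tau>)) * (norm (x (k - 1) \<omega> - yprev G \<eta> x \<xi> k \<omega>))\<^sup>2
     + (2 * \<eta> * (1 - \<tau>) / \<tau>) * inner (errprev G x St k \<omega>) (xs - yprev G \<eta> x \<xi> k \<omega>)"

text \<open>M: underlying probability space, F: filtration (F k = information up to iteration k).
 The vector conditional expectation E_k[e^k] is taken coordinatewise.\<close>
definition classB :: "'w measure \<Rightarrow> (nat \<Rightarrow> 'w measure) \<Rightarrow> (real^'n \<Rightarrow> real^'n)
     \<Rightarrow> (nat \<Rightarrow> 'w \<Rightarrow> real^'n) \<Rightarrow> (nat \<Rightarrow> 'w \<Rightarrow> real^'n) \<Rightarrow> real \<Rightarrow> bool" where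
  "classB M F G x St \<tau> \<longleftrightarrow> 0 < \<tau> \<and> \<tau> \<le> 1 \<and>
    (\<exists>(\<Delta> :: nat \<Rightarrow> 'w \<Rightarrow> real) (\<kappa>::real) (\<Theta>::real) (\<Theta>h::real) (\<delta> :: nat \<Rightarrow> real).
       0 < \<kappa> \<and> \<kappa> \<le> 1 \<and> \<Theta> \<ge> 0 \<and> \<Theta>h \<ge> 0 \<and> (\<forall>k. \<delta> k \<ge> 0) \<and>
       (\<forall>k. \<Delta> k \<in> borel_measurable M \<and> (\<forall>\<omega> \<in> space M. \<Delta> k \<omega> \<ge> 0)) \<and>
       (\<forall>k. AE \<omega> in M. \<forall>i.
          real_cond_exp M (F k) (\<lambda>\<omega>. errk G x St k \<omega> $ i) \<omega> = (1 - \<tau>) * (errprev G x St k \<omega> $ i)) \<and>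
       (\<forall>k. AE \<omega> in M.
          nn_cond_exp M (F k) (\<lambda>\<omega>. ennreal ((norm (errk G x St k \<omega>))\<^sup>2)) \<omega>
            \<le> nn_cond_exp M (F k) (\<lambda>\<omega>. ennreal (\<Delta> k \<omega>)) \<omega>) \<and>
       (\<forall>k. AE \<omega> in M.
          nn_cond_exp M (F k) (\<lambda>\<omega>. ennreal (\<Delta> k \<omega>)) \<omega>
            \<le> ennreal ((1 - \<kappa>) * (if k = 0 then 0 else \<Delta> (k - 1) \<omega>)
                + \<Theta> * (norm (x k \<omega> - x (k - 1) \<omega>))\<^sup>2
                + \<Theta>h * (norm (x (k - 1) \<omega> - x (k - 2) \<omega>))\<^sup>2 + \<delta> k)))"

end

theory Submission
  imports Defs
begin

lemma nsq: "(norm (x::'a::real_inner))\<^sup>2 = inner x x" by (simp add: power2_norm_eq_inner)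

lemma young_inner:
  fixes a b :: "'a::real_inner"
  assumes "t > 0"
  shows "2 * inner a b \<le> t * (norm a)\<^sup>2 + (1/t) * (norm b)\<^sup>2"
proof -
  have "0 \<le> (norm (t *\<^sub>R a - b))\<^sup>2" by simp
  also have "\<dots> = t\<^sup>2 * (norm a)\<^sup>2 - 2 * t * inner a b + (norm b)\<^sup>2"
    unfolding nsq by (simp add: inner_diff_left inner_diff_right inner_commute power2_eq_square algebra_simps)
  finally have "2 * t * inner a b \<le> t\<^sup>2 * (norm a)\<^sup>2 + (norm b)\<^sup>2" by simp
  moreover have "t * (t * (norm a)\<^sup>2 + (1/t) * (norm b)\<^sup>2) = t\<^sup>2 * (norm a)\<^sup>2 + (norm b)\<^sup>2"
    using assms by (simp add: field_simps power2_eq_square)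
  ultimately have "t * (2 * inner a b) \<le> t * (t * (norm a)\<^sup>2 + (1/t) * (norm b)\<^sup>2)"
    by (simp add: algebra_simps)
  then show ?thesis using assms by (simp add: mult_le_cancel_left)
qed

lemma norm_add_sq_le:
  fixes a b :: "'a::real_inner"
  shows "(norm (a + b))\<^sup>2 \<le> 2 * (norm a)\<^sup>2 + 2 * (norm b)\<^sup>2"
proof -
  have "0 \<le> (norm (a - b))\<^sup>2" by simp
  then show ?thesis unfolding nsq by (simp add: inner_add_left inner_add_right inner_diff_left inner_diff_right inner_commute)
qed

lemma norm_diff_sq_le:
  fixes a b c :: "'a::real_inner"
  shows "(norm (a - c))\<^sup>2 \<le> 2 * (norm (a - b))\<^sup>2 + 2 * (norm (b - c))\<^sup>2"
  using norm_add_sq_le[of "a - b" "b - c"] by simp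

lemma sos_de:
  fixes d e :: "'a::real_inner"
  assumes "g > 0" "c2 > 0" "eta > 0"
  shows "(2 - g*eta) * eta\<^sup>2 * (norm (d + e))\<^sup>2 \<le> (eta/g + 2*eta\<^sup>2/c2) * (norm d)\<^sup>2 + (2 + c2/2) * eta\<^sup>2 * (norm e)\<^sup>2"
proof -
  define t where "t = g * eta"
  have t: "t > 0" using assms by (simp add: t_def)
  have key: "(1/t + 2/c2) * (norm d)\<^sup>2 + (2 + c2/2) * (norm e)\<^sup>2 - (2 - t) * (norm (d + e))\<^sup>2
     = (1/t) * (norm (d - t *\<^sub>R (d + e)))\<^sup>2 + (2/c2) * (norm (d - (c2/2) *\<^sub>R e))\<^sup>2"
    unfolding nsq using t assms
    by (simp add: inner_add_left inner_add_right inner_diff_left inner_diff_right inner_commute field_simps power2_eq_square)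
  have "0 \<le> (1/t) * (norm (d - t *\<^sub>R (d + e)))\<^sup>2 + (2/c2) * (norm (d - (c2/2) *\<^sub>R e))\<^sup>2"
    using t assms by simp
  then have "(2 - t) * (norm (d + e))\<^sup>2 \<le> (1/t + 2/c2) * (norm d)\<^sup>2 + (2 + c2/2) * (norm e)\<^sup>2"
    using key by linarith
  then have "eta\<^sup>2 * ((2 - t) * (norm (d + e))\<^sup>2) \<le> eta\<^sup>2 * ((1/t + 2/c2) * (norm d)\<^sup>2 + (2 + c2/2) * (norm e)\<^sup>2)"
    by (simp add: mult_left_mono)
  moreover have "eta\<^sup>2 * ((1/t + 2/c2) * (norm d)\<^sup>2 + (2 + c2/2) * (norm e)\<^sup>2) = (eta/g + 2*eta\<^sup>2/c2) * (norm d)\<^sup>2 + (2 + c2/2) * eta\<^sup>2 * (norm e)\<^sup>2"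
    using assms by (simp add: t_def field_simps power2_eq_square)
  moreover have "eta\<^sup>2 * ((2 - t) * (norm (d + e))\<^sup>2) = (2 - g*eta) * eta\<^sup>2 * (norm (d + e))\<^sup>2"
    by (simp add: t_def)
  ultimately show ?thesis by linarith
qed

lemma final_comb:
  fixes \<eta> \<tau> c1 c2 \<gamma> c \<rho> L Nyx Nu Nyxp Nxpyp Nxxp Ne Nd Nw Nde Nwe I1 Iyy Iwx Iwu Iue Nyy Nq1 Nq2 Iexy :: real
  assumes eta: "\<eta> > 0" and tau: "\<tau> > 0" and c1: "c1 > 0" and c2: "c2 > 0" and gam: "\<gamma> > 0"
    and cpos: "c > 0" and rho: "\<rho> \<ge> 0"
    and E1: "Nq1 = Nyx - 2*\<eta>*(Iwx + Iwu) + 2*\<eta>*(I1 + Iyy) + \<eta>\<^sup>2 * Nwe"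
    and E2: "Nq2 = \<eta>\<^sup>2 * Nde"
    and E3: "-2*\<eta>*Iwu + \<eta>\<^sup>2*Nwe + (1-\<gamma>*\<eta>)*\<eta>\<^sup>2*Nde = -Nu + 2*\<eta>*Iue + (2-\<gamma>*\<eta>)*\<eta>\<^sup>2*Nde"
    and E4: "Iexy = I1 + Iyy"
    and F1: "Iwx + \<rho>*Nw \<ge> 0"
    and F2: "\<eta>\<^sup>2*Nw \<le> 2*Nu + 2*\<eta>\<^sup>2*Nd"
    and F4: "2*\<eta>*Iue \<le> (2/c2)*Nu + (c2*\<eta>\<^sup>2/2)*Ne"
    and F5: "(2-\<gamma>*\<eta>)*\<eta>\<^sup>2*Nde \<le> (\<eta>/\<gamma> + 2*\<eta>\<^sup>2/c2)*Nd + (2+c2/2)*\<eta>\<^sup>2*Ne"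
    and F6: "2*Iyy \<le> c1*Ne + (1/c1)*Nyy"
    and F7: "Nyy \<le> 2*Nxpyp + 2*Nyxp"
    and F8: "Nd \<le> L\<^sup>2*Nxxp"
    and F9: "Nxxp \<le> 2*Nu + 2*Nyxp"
  shows "Nq1 + (1-\<gamma>*\<eta>)*Nq2 + (2*\<eta>/(c1*\<tau>))*Nu + (2*\<eta>*(1-\<tau>)/\<tau>)*Iexy
     \<le> Nyx + (1-\<gamma>*\<eta>)*Nyxp + (2*\<eta>/(c1*\<tau>))*Nxpyp
       - (1 - 2*\<eta>/(c1*\<tau>) - 4*\<rho>/\<eta> - 2/c2 - 2*L\<^sup>2*\<eta>*(c + 4*\<rho> + 1/\<gamma> + 2*\<eta>/c2)) * Nu
       - (1 - \<gamma>*\<eta> - (2*\<eta>/(c1*\<tau>) + 2*L\<^sup>2*\<eta>*(c + 4*\<rho> + 1/\<gamma> + 2*\<eta>/c2))) * Nyxp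
       - c*L\<^sup>2*\<eta>*Nxxp + (2*\<eta>/\<tau>)*I1 + \<eta>*(2*\<eta> + c1/\<tau> + c2*\<eta>)*Ne"
proof -
  define K where "K = c + 4*\<rho> + 1/\<gamma> + 2*\<eta>/c2"
  have K: "K \<ge> 0" using cpos rho gam c2 eta unfolding K_def by (simp add: add_nonneg_nonneg)
  define S where "S = 2*\<eta>*(Iwx + \<rho>*Nw)
    + (2*\<rho>/\<eta>)*(2*Nu + 2*\<eta>\<^sup>2*Nd - \<eta>\<^sup>2*Nw)
    + ((2/c2)*Nu + (c2*\<eta>\<^sup>2/2)*Ne - 2*\<eta>*Iue)
    + ((\<eta>/\<gamma> + 2*\<eta>\<^sup>2/c2)*Nd + (2+c2/2)*\<eta>\<^sup>2*Ne - (2-\<gamma>*\<eta>)*\<eta>\<^sup>2*Nde)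
    + (\<eta>/\<tau>)*(c1*Ne + (1/c1)*Nyy - 2*Iyy)
    + (\<eta>/(c1*\<tau>))*(2*Nxpyp + 2*Nyxp - Nyy)
    + \<eta>*(4*\<rho> + 1/\<gamma> + 2*\<eta>/c2)*(L\<^sup>2*Nxxp - Nd)
    + \<eta>*L\<^sup>2*K*(2*Nu + 2*Nyxp - Nxxp)"
  have s1: "0 \<le> 2*\<eta>*(Iwx + \<rho>*Nw)" using eta F1 by simp
  have s2: "0 \<le> (2*\<rho>/\<eta>)*(2*Nu + 2*\<eta>\<^sup>2*Nd - \<eta>\<^sup>2*Nw)" using eta rho F2 by simp
  have s3: "0 \<le> ((2/c2)*Nu + (c2*\<eta>\<^sup>2/2)*Ne - 2*\<eta>*Iue)" using F4 by simp
  have s4: "0 \<le> ((\<eta>/\<gamma> + 2*\<eta>\<^sup>2/c2)*Nd + (2+c2/2)*\<eta>\<^sup>2*Ne - (2-\<gamma>*\<eta>)*\<eta>\<^sup>2*Nde)" using F5 by simp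
  have s5: "0 \<le> (\<eta>/\<tau>)*(c1*Ne + (1/c1)*Nyy - 2*Iyy)" using F6 eta tau by simp
  have s6: "0 \<le> (\<eta>/(c1*\<tau>))*(2*Nxpyp + 2*Nyxp - Nyy)" using F7 eta tau c1 by simp
  have s7: "0 \<le> \<eta>*(4*\<rho> + 1/\<gamma> + 2*\<eta>/c2)*(L\<^sup>2*Nxxp - Nd)" using F8 eta rho gam c2
    by (intro mult_nonneg_nonneg) (auto simp: add_nonneg_nonneg)
  have s8: "0 \<le> \<eta>*L\<^sup>2*K*(2*Nu + 2*Nyxp - Nxxp)" using F9 eta K by simp
  have S: "S \<ge> 0" unfolding S_def using s1 s2 s3 s4 s5 s6 s7 s8 by linarith
  have LHS: "Nq1 + (1-\<gamma>*\<eta>)*Nq2 + (2*\<eta>/(c1*\<tau>))*Nu + (2*\<eta>*(1-\<tau>)/\<tau>)*Iexy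
     = Nyx - 2*\<eta>*Iwx - Nu + 2*\<eta>*Iue + (2-\<gamma>*\<eta>)*\<eta>\<^sup>2*Nde + (2*\<eta>/\<tau>)*(I1 + Iyy) + (2*\<eta>/(c1*\<tau>))*Nu"
  proof -
    have "Nq1 + (1-\<gamma>*\<eta>)*Nq2 = Nyx - 2*\<eta>*Iwx + 2*\<eta>*(I1+Iyy) + (-2*\<eta>*Iwu + \<eta>\<^sup>2*Nwe + (1-\<gamma>*\<eta>)*\<eta>\<^sup>2*Nde)"
      unfolding E1 E2 by (simp add: algebra_simps)
    also have "\<dots> = Nyx - 2*\<eta>*Iwx + 2*\<eta>*(I1+Iyy) + (-Nu + 2*\<eta>*Iue + (2-\<gamma>*\<eta>)*\<eta>\<^sup>2*Nde)"
      unfolding E3 ..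
    finally have C: "Nq1 + (1-\<gamma>*\<eta>)*Nq2 = Nyx - 2*\<eta>*Iwx + 2*\<eta>*(I1+Iyy) + (-Nu + 2*\<eta>*Iue + (2-\<gamma>*\<eta>)*\<eta>\<^sup>2*Nde)" .
    show ?thesis unfolding C E4 using tau by (simp add: field_simps)
  qed
  have EQ: "(Nyx + (1-\<gamma>*\<eta>)*Nyxp + (2*\<eta>/(c1*\<tau>))*Nxpyp
       - (1 - 2*\<eta>/(c1*\<tau>) - 4*\<rho>/\<eta> - 2/c2 - 2*L\<^sup>2*\<eta>*(c + 4*\<rho> + 1/\<gamma> + 2*\<eta>/c2)) * Nu
       - (1 - \<gamma>*\<eta> - (2*\<eta>/(c1*\<tau>) + 2*L\<^sup>2*\<eta>*(c + 4*\<rho> + 1/\<gamma> + 2*\<eta>/c2))) * Nyxp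
       - c*L\<^sup>2*\<eta>*Nxxp + (2*\<eta>/\<tau>)*I1 + \<eta>*(2*\<eta> + c1/\<tau> + c2*\<eta>)*Ne)
     - (Nyx - 2*\<eta>*Iwx - Nu + 2*\<eta>*Iue + (2-\<gamma>*\<eta>)*\<eta>\<^sup>2*Nde + (2*\<eta>/\<tau>)*(I1 + Iyy) + (2*\<eta>/(c1*\<tau>))*Nu) = S"
    unfolding S_def K_def using eta tau c1 c2 gam by (simp add: field_simps power2_eq_square)
  show ?thesis using LHS EQ S by linarith
qed

lemma descent_pw:
  fixes X Xp Y Yp xs w d e :: "'a::real_inner"
  assumes eta: "\<eta> > 0" and tau: "\<tau> > 0" and c1: "c1 > 0" and c2: "c2 > 0" and gam: "\<gamma> > 0"
    and cpos: "c > 0" and rho: "\<rho> \<ge> 0"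
    and w_eq: "w = (1/\<eta>) *\<^sub>R (Y - X) + d"
    and minty: "inner w (X - xs) \<ge> - \<rho> * (norm w)\<^sup>2"
    and lip: "(norm d)\<^sup>2 \<le> L\<^sup>2 * (norm (X - Xp))\<^sup>2"
  shows "(norm (Y - \<eta> *\<^sub>R w - \<eta> *\<^sub>R e - xs))\<^sup>2 + (1 - \<gamma>*\<eta>) * (norm (Y - \<eta> *\<^sub>R w - \<eta> *\<^sub>R e - X))\<^sup>2
       + (2*\<eta>/(c1*\<tau>)) * (norm (X - Y))\<^sup>2 + (2*\<eta>*(1-\<tau>)/\<tau>) * inner e (xs - Y)
     \<le> (norm (Y - xs))\<^sup>2 + (1-\<gamma>*\<eta>) * (norm (Y - Xp))\<^sup>2 + (2*\<eta>/(c1*\<tau>)) * (norm (Xp - Yp))\<^sup>2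
       - (1 - 2*\<eta>/(c1*\<tau>) - 4*\<rho>/\<eta> - 2/c2 - 2*L\<^sup>2*\<eta>*(c + 4*\<rho> + 1/\<gamma> + 2*\<eta>/c2)) * (norm (Y - X))\<^sup>2
       - (1 - \<gamma>*\<eta> - (2*\<eta>/(c1*\<tau>) + 2*L\<^sup>2*\<eta>*(c + 4*\<rho> + 1/\<gamma> + 2*\<eta>/c2))) * (norm (Y - Xp))\<^sup>2
       - c*L\<^sup>2*\<eta>*(norm (X - Xp))\<^sup>2 + (2*\<eta>/\<tau>) * inner e (xs - Yp) + \<eta>*(2*\<eta> + c1/\<tau> + c2*\<eta>)*(norm e)\<^sup>2"
proof -
  have ew: "\<eta> *\<^sub>R w = (Y - X) + \<eta> *\<^sub>R d" using eta by (simp add: w_eq scaleR_add_right)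
  have E1: "(norm (Y - \<eta> *\<^sub>R w - \<eta> *\<^sub>R e - xs))\<^sup>2 = (norm (Y - xs))\<^sup>2 - 2*\<eta>*(inner w (X - xs) + inner w (Y - X))
      + 2*\<eta>*(inner e (xs - Yp) + inner e (Yp - Y)) + \<eta>\<^sup>2 * (norm (w + e))\<^sup>2"
    unfolding nsq by (simp add: inner_add_left inner_add_right inner_diff_left inner_diff_right inner_commute algebra_simps power2_eq_square)
  have "Y - \<eta> *\<^sub>R w - \<eta> *\<^sub>R e - X = - \<eta> *\<^sub>R (d + e)" using ew by (simp add: algebra_simps)
  then have E2: "(norm (Y - \<eta> *\<^sub>R w - \<eta> *\<^sub>R e - X))\<^sup>2 = \<eta>\<^sup>2 * (norm (d + e))\<^sup>2"
    by (simp add: power_mult_distrib)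
  have E3: "-2*\<eta>*inner w (Y - X) + \<eta>\<^sup>2*(norm (w + e))\<^sup>2 + (1-\<gamma>*\<eta>)*\<eta>\<^sup>2*(norm (d + e))\<^sup>2
     = -(norm (Y - X))\<^sup>2 + 2*\<eta>*inner (Y - X) e + (2-\<gamma>*\<eta>)*\<eta>\<^sup>2*(norm (d + e))\<^sup>2"
  proof -
    have "\<eta> *\<^sub>R (w + e) = (Y - X) + \<eta> *\<^sub>R (d + e)" using ew by (simp add: algebra_simps)
    then have a: "\<eta>\<^sup>2*(norm (w + e))\<^sup>2 = (norm ((Y - X) + \<eta> *\<^sub>R (d + e)))\<^sup>2"
      by (metis norm_scaleR power_mult_distrib real_norm_def power2_abs)
    have b: "\<eta> * inner w (Y - X) = inner ((Y - X) + \<eta> *\<^sub>R d) (Y - X)"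
      using ew by (metis inner_scaleR_left)
    have "-2*\<eta>*inner w (Y - X) = -2 * inner ((Y - X) + \<eta> *\<^sub>R d) (Y - X)" using b by simp
    then show ?thesis unfolding a unfolding nsq
      by (simp add: inner_add_left inner_add_right inner_diff_left inner_diff_right inner_commute algebra_simps power2_eq_square)
  qed
  have E4: "inner e (xs - Y) = inner e (xs - Yp) + inner e (Yp - Y)" by (simp add: inner_diff_right)
  have F1: "inner w (X - xs) + \<rho> * (norm w)\<^sup>2 \<ge> 0" using minty by simp
  have F2: "\<eta>\<^sup>2 * (norm w)\<^sup>2 \<le> 2 * (norm (Y - X))\<^sup>2 + 2 * \<eta>\<^sup>2 * (norm d)\<^sup>2"
  proof -
    have "\<eta>\<^sup>2 * (norm w)\<^sup>2 = (norm ((Y - X) + \<eta> *\<^sub>R d))\<^sup>2"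
      using ew by (metis norm_scaleR power_mult_distrib real_norm_def power2_abs)
    also have "\<dots> \<le> 2 * (norm (Y - X))\<^sup>2 + 2 * (norm (\<eta> *\<^sub>R d))\<^sup>2" by (rule norm_add_sq_le)
    finally show ?thesis by (simp add: power_mult_distrib)
  qed
  have F4: "2*\<eta>*inner (Y - X) e \<le> (2/c2) * (norm (Y - X))\<^sup>2 + (c2*\<eta>\<^sup>2/2) * (norm e)\<^sup>2"
    using young_inner[of "2/c2" "Y - X" "\<eta> *\<^sub>R e"] c2 by (simp add: power_mult_distrib)
  have F5: "(2-\<gamma>*\<eta>)*\<eta>\<^sup>2*(norm (d + e))\<^sup>2 \<le> (\<eta>/\<gamma> + 2*\<eta>\<^sup>2/c2)*(norm d)\<^sup>2 + (2+c2/2)*\<eta>\<^sup>2*(norm e)\<^sup>2"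
    using sos_de[OF gam c2 eta] by (simp add: mult.commute mult.left_commute)
  have F6: "2 * inner e (Yp - Y) \<le> c1 * (norm e)\<^sup>2 + (1/c1) * (norm (Yp - Y))\<^sup>2"
    using young_inner[OF c1] .
  have F7: "(norm (Yp - Y))\<^sup>2 \<le> 2 * (norm (Xp - Yp))\<^sup>2 + 2 * (norm (Y - Xp))\<^sup>2"
    using norm_diff_sq_le[where a=Yp and b=Xp and c=Y] by (simp add: norm_minus_commute)
  have F9: "(norm (X - Xp))\<^sup>2 \<le> 2 * (norm (Y - X))\<^sup>2 + 2 * (norm (Y - Xp))\<^sup>2"
    using norm_diff_sq_le[where a=X and b=Y and c=Xp] by (simp add: norm_minus_commute)
  have nxy: "norm (X - Y) = norm (Y - X)" by (rule norm_minus_commute)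
  show ?thesis unfolding nxy
    by (rule final_comb[OF eta tau c1 c2 gam cpos rho E1 E2 E3 E4 F1 F2 F4 F5 F6 F7 lip F9])
qed

lemma lower_aux:
  fixes Y xs Xp Yp e :: "'a::real_inner"
  shows "(norm (Y - xs))\<^sup>2 + b * (norm (Y - Xp))\<^sup>2 + k * (norm (Xp - Yp))\<^sup>2 + a * inner e (xs - Yp)
     \<ge> 3/4 * (norm (Y - xs))\<^sup>2 + (b - 1/2) * (norm (Y - Xp))\<^sup>2 + (k - 1/2) * (norm (Xp - Yp))\<^sup>2 - 2*a\<^sup>2 * (norm e)\<^sup>2"
proof -
  have "(norm (Y - xs))\<^sup>2 + b * (norm (Y - Xp))\<^sup>2 + k * (norm (Xp - Yp))\<^sup>2 + a * inner e (xs - Yp)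
     - (3/4 * (norm (Y - xs))\<^sup>2 + (b - 1/2) * (norm (Y - Xp))\<^sup>2 + (k - 1/2) * (norm (Xp - Yp))\<^sup>2 - 2*a\<^sup>2 * (norm e)\<^sup>2)
     = 1/4 * (norm ((Y - xs) - (2*a) *\<^sub>R e))\<^sup>2 + 1/2 * (norm ((Y - Xp) + a *\<^sub>R e))\<^sup>2 + 1/2 * (norm ((Xp - Yp) + a *\<^sub>R e))\<^sup>2"
    unfolding nsq
    by (simp add: inner_add_left inner_add_right inner_diff_left inner_diff_right inner_commute algebra_simps power2_eq_square) (simp add: field_simps)
  moreover have "0 \<le> 1/4 * (norm ((Y - xs) - (2*a) *\<^sub>R e))\<^sup>2 + 1/2 * (norm ((Y - Xp) + a *\<^sub>R e))\<^sup>2 + 1/2 * (norm ((Xp - Yp) + a *\<^sub>R e))\<^sup>2"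
    by simp
  ultimately show ?thesis by linarith
qed

lemma lower_pw:
  fixes Y xs Xp Yp e :: "'a::real_inner"
  assumes tau: "\<tau> > 0"
  shows "(norm (Y - xs))\<^sup>2 + (1 - \<gamma>*\<eta>) * (norm (Y - Xp))\<^sup>2 + (2*\<eta>/(c1*\<tau>)) * (norm (Xp - Yp))\<^sup>2
        + (2*\<eta>*(1-\<tau>)/\<tau>) * inner e (xs - Yp)
     \<ge> 3 / 4 * (norm (Y - xs))\<^sup>2 + (1 - 2*\<gamma>*\<eta>) / 2 * (norm (Y - Xp))\<^sup>2
       + (2*\<eta>/(c1*\<tau>) - 1/2) * (norm (Xp - Yp))\<^sup>2 - 8*(1-\<tau>)\<^sup>2*\<eta>\<^sup>2/\<tau>\<^sup>2 * (norm e)\<^sup>2"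
proof -
  have a: "8*(1-\<tau>)\<^sup>2*\<eta>\<^sup>2/\<tau>\<^sup>2 = 2*(2*\<eta>*(1-\<tau>)/\<tau>)\<^sup>2" using tau by (simp add: field_simps power2_eq_square)
  have b: "(1 - 2*\<gamma>*\<eta>) / 2 = (1 - \<gamma>*\<eta>) - 1/2" by simp
  show ?thesis unfolding a b by (rule lower_aux)
qed
definition sqi :: "'a measure \<Rightarrow> ('a \<Rightarrow> 'b::real_normed_vector) \<Rightarrow> bool" where
  "sqi M f \<longleftrightarrow> f \<in> borel_measurable M \<and> integrable M (\<lambda>\<omega>. (norm (f \<omega>))\<^sup>2)"

lemma sqh1: "((a::real) + b)\<^sup>2 \<le> 2 * a\<^sup>2 + 2 * b\<^sup>2"
proof -
  have "0 \<le> (a - b)\<^sup>2" by simp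
  then show ?thesis by (simp add: power2_eq_square algebra_simps)
qed

lemma sqh2: "(a::real) * b \<le> a\<^sup>2 + b\<^sup>2"
proof -
  have "0 \<le> (a - b)\<^sup>2" by simp
  then have "2 * (a * b) \<le> a\<^sup>2 + b\<^sup>2" by (simp add: power2_eq_square algebra_simps)
  moreover have "0 \<le> a\<^sup>2" "0 \<le> b\<^sup>2" by simp_all
  ultimately show ?thesis by linarith
qed

lemma sqi_meas: "sqi M f \<Longrightarrow> f \<in> borel_measurable M" by (simp add: sqi_def)
lemma sqi_int: "sqi M f \<Longrightarrow> integrable M (\<lambda>\<omega>. (norm (f \<omega>))\<^sup>2)" by (simp add: sqi_def)

lemma sqi_add:
  fixes f g :: "'a \<Rightarrow> 'b::{real_inner, second_countable_topology}"
  assumes "sqi M f" "sqi M g" shows "sqi M (\<lambda>\<omega>. f \<omega> + g \<omega>)"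
proof -
  have [measurable]: "f \<in> borel_measurable M" "g \<in> borel_measurable M" using assms by (auto simp: sqi_def)
  have I: "integrable M (\<lambda>\<omega>. 2 * (norm (f \<omega>))\<^sup>2 + 2 * (norm (g \<omega>))\<^sup>2)"
    using assms unfolding sqi_def by (intro Bochner_Integration.integrable_add Bochner_Integration.integrable_mult_right) auto
  have B: "(norm (f \<omega> + g \<omega>))\<^sup>2 \<le> 2 * (norm (f \<omega>))\<^sup>2 + 2 * (norm (g \<omega>))\<^sup>2" for \<omega>
  proof -
    have "(norm (f \<omega> + g \<omega>))\<^sup>2 \<le> (norm (f \<omega>) + norm (g \<omega>))\<^sup>2"
      by (simp add: norm_triangle_ineq power_mono)
    also have "\<dots> \<le> 2 * (norm (f \<omega>))\<^sup>2 + 2 * (norm (g \<omega>))\<^sup>2"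
      by (rule sqh1)
    finally show ?thesis .
  qed
  have "integrable M (\<lambda>\<omega>. (norm (f \<omega> + g \<omega>))\<^sup>2)"
    apply (rule Bochner_Integration.integrable_bound[OF I])
     apply measurable
    apply (rule AE_I2)
    using B by (simp add: order_trans)
  then show ?thesis by (simp add: sqi_def)
qed

lemma sqi_scale:
  fixes f :: "'a \<Rightarrow> 'b::{real_inner, second_countable_topology}"
  assumes "sqi M f" shows "sqi M (\<lambda>\<omega>. c *\<^sub>R f \<omega>)"
  using assms by (auto simp: sqi_def power_mult_distrib)

lemma sqi_uminus:
  fixes f :: "'a \<Rightarrow> 'b::{real_inner, second_countable_topology}"
  assumes "sqi M f" shows "sqi M (\<lambda>\<omega>. - f \<omega>)"
  using assms by (auto simp: sqi_def)

lemma sqi_diff: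
  fixes f g :: "'a \<Rightarrow> 'b::{real_inner, second_countable_topology}"
  assumes "sqi M f" "sqi M g" shows "sqi M (\<lambda>\<omega>. f \<omega> - g \<omega>)"
  using sqi_add[OF assms(1) sqi_uminus[OF assms(2)]] by simp

lemma sqi_const:
  fixes a :: "'b::{real_inner, second_countable_topology}"
  assumes "finite_measure M" shows "sqi M (\<lambda>\<omega>. a)"
  using assms by (auto simp: sqi_def finite_measure.integrable_const)

lemma sqi_inner:
  fixes f g :: "'a \<Rightarrow> 'b::{real_inner, second_countable_topology}"
  assumes "sqi M f" "sqi M g" shows "integrable M (\<lambda>\<omega>. inner (f \<omega>) (g \<omega>))"
proof -
  have [measurable]: "f \<in> borel_measurable M" "g \<in> borel_measurable M" using assms by (auto simp: sqi_def)
  have I: "integrable M (\<lambda>\<omega>. (norm (f \<omega>))\<^sup>2 + (norm (g \<omega>))\<^sup>2)"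
    using assms unfolding sqi_def by (intro Bochner_Integration.integrable_add) auto
  have B: "norm (inner (f \<omega>) (g \<omega>)) \<le> norm ((norm (f \<omega>))\<^sup>2 + (norm (g \<omega>))\<^sup>2)" for \<omega>
  proof -
    have "\<bar>inner (f \<omega>) (g \<omega>)\<bar> \<le> norm (f \<omega>) * norm (g \<omega>)" by (rule Cauchy_Schwarz_ineq2)
    also have "\<dots> \<le> (norm (f \<omega>))\<^sup>2 + (norm (g \<omega>))\<^sup>2" by (rule sqh2)
    finally show ?thesis by simp
  qed
  show ?thesis
    apply (rule Bochner_Integration.integrable_bound[OF I])
     apply measurable
    apply (rule AE_I2)
    using B by simp
qed

lemma sqi_G:
  fixes f :: "'a \<Rightarrow> 'b::{real_inner, second_countable_topology}" and G :: "'b \<Rightarrow> 'b"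
  assumes "finite_measure M" "sqi M f" and lip: "\<And>a b. norm (G a - G b) \<le> L * norm (a - b)" and L: "L \<ge> 0"
  shows "sqi M (\<lambda>\<omega>. G (f \<omega>))"
proof -
  have cont: "continuous_on UNIV G"
    by (rule lipschitz_on_continuous_on[of L]) (auto simp: lipschitz_on_def dist_norm L lip)
  have [measurable]: "f \<in> borel_measurable M" using assms by (auto simp: sqi_def)
  have m: "(\<lambda>\<omega>. G (f \<omega>)) \<in> borel_measurable M" by (rule borel_measurable_continuous_on[OF cont]) simp
  have "sqi M (\<lambda>\<omega>. G 0 + (G (f \<omega>) - G 0))" 
  proof (rule sqi_add[OF sqi_const[OF assms(1)]])
    have I: "integrable M (\<lambda>\<omega>. L\<^sup>2 * (norm (f \<omega>))\<^sup>2)" using assms unfolding sqi_def by (intro Bochner_Integration.integrable_mult_right) auto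
    have B: "norm ((norm (G (f \<omega>) - G 0))\<^sup>2) \<le> norm (L\<^sup>2 * (norm (f \<omega>))\<^sup>2)" for \<omega>
      using lip[of "f \<omega>" 0] L by (simp add: power_mult_distrib[symmetric] power_mono)
    have "integrable M (\<lambda>\<omega>. (norm (G (f \<omega>) - G 0))\<^sup>2)"
      apply (rule Bochner_Integration.integrable_bound[OF I])
       apply (use m in measurable)
      apply (rule AE_I2)
      using B by simp
    then show "sqi M (\<lambda>\<omega>. G (f \<omega>) - G 0)" using m by (simp add: sqi_def)
  qed
  then show ?thesis by simp
qed

lemma meas_nth:
  fixes f :: "'a \<Rightarrow> real^'n"
  assumes "f \<in> borel_measurable M" shows "(\<lambda>\<omega>. f \<omega> $ i) \<in> borel_measurable M"
  by (rule borel_measurable_continuous_on[OF linear_continuous_on[OF bounded_linear_vec_nth] assms])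

lemma sqi_comp_prod:
  fixes f g :: "'a \<Rightarrow> real^'n"
  assumes "sqi M f" "sqi M g" shows "integrable M (\<lambda>\<omega>. f \<omega> $ i * g \<omega> $ i)"
proof -
  have [measurable]: "f \<in> borel_measurable M" "g \<in> borel_measurable M" using assms by (auto simp: sqi_def)
  have I: "integrable M (\<lambda>\<omega>. (norm (f \<omega>))\<^sup>2 + (norm (g \<omega>))\<^sup>2)"
    using assms unfolding sqi_def by (intro Bochner_Integration.integrable_add) auto
  have B: "norm (f \<omega> $ i * g \<omega> $ i) \<le> norm ((norm (f \<omega>))\<^sup>2 + (norm (g \<omega>))\<^sup>2)" for \<omega>
  proof -
    have "\<bar>f \<omega> $ i * g \<omega> $ i\<bar> \<le> norm (f \<omega>) * norm (g \<omega>)"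
      by (simp add: abs_mult mult_mono component_le_norm_cart)
    also have "\<dots> \<le> (norm (f \<omega>))\<^sup>2 + (norm (g \<omega>))\<^sup>2" by (rule sqh2)
    finally show ?thesis by simp
  qed
  show ?thesis
    apply (rule Bochner_Integration.integrable_bound[OF I])
     apply (intro borel_measurable_times meas_nth; simp)
    apply (rule AE_I2)
    using B by simp
qed

lemma meas_sub: "f \<in> measurable A N \<Longrightarrow> space A = space B \<Longrightarrow> sets A \<subseteq> sets B \<Longrightarrow> f \<in> measurable B N"
  by (auto simp: measurable_def)

lemma lip_F:
  assumes "assumptionA_F n Gi G L"
  shows "(norm (G a - G b))\<^sup>2 \<le> L\<^sup>2 * (norm (a - b))\<^sup>2"
proof -
  have n: "n \<ge> 1" and Gd: "\<And>x. G x = (1 / real n) *\<^sub>R (\<Sum>i = 1..n. Gi i x)"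
    and Lb: "(1 / real n) * (\<Sum>i = 1..n. (norm (Gi i a - Gi i b))\<^sup>2) \<le> L\<^sup>2 * (norm (a - b))\<^sup>2"
    using assms unfolding assumptionA_F_def by auto
  have "G a - G b = (1 / real n) *\<^sub>R (\<Sum>i = 1..n. Gi i a - Gi i b)"
    by (simp add: Gd sum_subtractf scaleR_diff_right)
  then have "norm (G a - G b) = (1 / real n) * norm (\<Sum>i = 1..n. Gi i a - Gi i b)" by simp
  also have "\<dots> \<le> (1 / real n) * (\<Sum>i = 1..n. norm (Gi i a - Gi i b))"
    by (intro mult_left_mono norm_sum) simp
  finally have 1: "(norm (G a - G b))\<^sup>2 \<le> ((1 / real n) * (\<Sum>i = 1..n. norm (Gi i a - Gi i b)))\<^sup>2"
    by (simp add: power_mono)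
  have "(\<Sum>i = 1..n. norm (Gi i a - Gi i b) * 1)\<^sup>2 \<le> (\<Sum>i = 1..n. (norm (Gi i a - Gi i b))\<^sup>2) * (\<Sum>i = 1..n. 1\<^sup>2)"
    by (rule Cauchy_Schwarz_ineq_sum)
  then have 2: "(\<Sum>i = 1..n. norm (Gi i a - Gi i b))\<^sup>2 \<le> (\<Sum>i = 1..n. (norm (Gi i a - Gi i b))\<^sup>2) * real n" by simp
  have "((1 / real n) * (\<Sum>i = 1..n. norm (Gi i a - Gi i b)))\<^sup>2 = (1 / real n)\<^sup>2 * (\<Sum>i = 1..n. norm (Gi i a - Gi i b))\<^sup>2"
    by (rule power_mult_distrib)
  also have "\<dots> \<le> (1 / real n)\<^sup>2 * ((\<Sum>i = 1..n. (norm (Gi i a - Gi i b))\<^sup>2) * real n)"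
    by (rule mult_left_mono[OF 2]) simp
  also have "\<dots> = (1 / real n) * (\<Sum>i = 1..n. (norm (Gi i a - Gi i b))\<^sup>2)"
    using n by (simp add: power2_eq_square field_simps)
  finally show ?thesis using 1 Lb by linarith
qed

lemma lip_E:
  assumes "assumptionA_E P Gs G \<sigma> L"
  shows "(norm (G a - G b))\<^sup>2 \<le> L\<^sup>2 * (norm (a - b))\<^sup>2"
proof -
  have P: "prob_space P" and intg: "\<And>x. integrable P (Gs x)" and Gd: "\<And>x. G x = (\<integral>\<zeta>. Gs x \<zeta> \<partial>P)"
    and Lb: "(\<integral>\<^sup>+\<zeta>. ennreal ((norm (Gs a \<zeta> - Gs b \<zeta>))\<^sup>2) \<partial>P) \<le> ennreal (L\<^sup>2 * (norm (a - b))\<^sup>2)"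
    using assms unfolding assumptionA_E_def by auto
  interpret prob_space P by (rule P)
  define f where "f = (\<lambda>\<zeta>. Gs a \<zeta> - Gs b \<zeta>)"
  have fi: "integrable P f" unfolding f_def using intg by simp
  have [measurable]: "f \<in> borel_measurable P" using fi by simp
  have ni: "integrable P (\<lambda>\<zeta>. norm (f \<zeta>))" using fi by simp
  have Lb': "(\<integral>\<^sup>+\<zeta>. ennreal ((norm (f \<zeta>))\<^sup>2) \<partial>P) \<le> ennreal (L\<^sup>2 * (norm (a - b))\<^sup>2)"
    using Lb unfolding f_def .
  have si: "integrable P (\<lambda>\<zeta>. (norm (f \<zeta>))\<^sup>2)"
  proof (rule integrableI_bounded)
    show "(\<lambda>\<zeta>. (norm (f \<zeta>))\<^sup>2) \<in> borel_measurable P" by measurable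
    have "(\<integral>\<^sup>+\<zeta>. ennreal (norm ((norm (f \<zeta>))\<^sup>2)) \<partial>P) = (\<integral>\<^sup>+\<zeta>. ennreal ((norm (f \<zeta>))\<^sup>2) \<partial>P)" by simp
    also have "\<dots> < \<infinity>" using Lb' by (simp add: le_less_trans)
    finally show "(\<integral>\<^sup>+\<zeta>. ennreal (norm ((norm (f \<zeta>))\<^sup>2)) \<partial>P) < \<infinity>" .
  qed
  have "ennreal (\<integral>\<zeta>. (norm (f \<zeta>))\<^sup>2 \<partial>P) = (\<integral>\<^sup>+\<zeta>. ennreal ((norm (f \<zeta>))\<^sup>2) \<partial>P)"
    by (rule nn_integral_eq_integral[symmetric]) (use si in auto)
  with Lb' have "ennreal (\<integral>\<zeta>. (norm (f \<zeta>))\<^sup>2 \<partial>P) \<le> ennreal (L\<^sup>2 * (norm (a - b))\<^sup>2)"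
    by simp
  then have S: "(\<integral>\<zeta>. (norm (f \<zeta>))\<^sup>2 \<partial>P) \<le> L\<^sup>2 * (norm (a - b))\<^sup>2"
    by (subst (asm) ennreal_le_iff) auto
  define m where "m = (\<integral>\<zeta>. norm (f \<zeta>) \<partial>P)"
  have "0 \<le> (\<integral>\<zeta>. (norm (f \<zeta>) - m)\<^sup>2 \<partial>P)" by simp
  also have "(\<integral>\<zeta>. (norm (f \<zeta>) - m)\<^sup>2 \<partial>P) = (\<integral>\<zeta>. (norm (f \<zeta>))\<^sup>2 - 2 * m * norm (f \<zeta>) + m\<^sup>2 \<partial>P)"
    by (simp add: power2_eq_square algebra_simps)
  also have "\<dots> = (\<integral>\<zeta>. (norm (f \<zeta>))\<^sup>2 \<partial>P) - 2 * m * m + m\<^sup>2"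
    using si ni by (simp add: m_def prob_space)
  finally have J: "m\<^sup>2 \<le> (\<integral>\<zeta>. (norm (f \<zeta>))\<^sup>2 \<partial>P)" by (simp add: power2_eq_square)
  have "G a - G b = (\<integral>\<zeta>. f \<zeta> \<partial>P)" unfolding Gd f_def using intg by simp
  then have "norm (G a - G b) \<le> m" unfolding m_def by (simp add: integral_norm_bound)
  then have "(norm (G a - G b))\<^sup>2 \<le> m\<^sup>2" by (simp add: power_mono)
  then show ?thesis using J S by linarith
qed

lemma lip_abs:
  assumes "\<And>a b. (norm (G a - G b))\<^sup>2 \<le> L\<^sup>2 * (norm (a - b))\<^sup>2"
  shows "norm (G a - G b) \<le> \<bar>L\<bar> * norm (a - b)"
proof (rule power2_le_imp_le)
  show "(norm (G a - G b))\<^sup>2 \<le> (\<bar>L\<bar> * norm (a - b))\<^sup>2" using assms by (simp add: power_mult_distrib)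
qed simp
theorem mainTheorem10:
  fixes G :: "real^'n \<Rightarrow> real^'n" and T :: "real^'n \<Rightarrow> (real^'n) set"
    and L \<rho> \<eta> \<tau> \<gamma> c c1 c2 :: real and xs x0 \<xi>0 :: "real^'n"
    and P :: "'z measure" and Gs :: "real^'n \<Rightarrow> 'z \<Rightarrow> real^'n" and \<sigma> :: real
    and n :: nat and Gi :: "nat \<Rightarrow> real^'n \<Rightarrow> real^'n"
    and M :: "'w measure" and F :: "nat \<Rightarrow> 'w measure"
    and x \<xi> St :: "nat \<Rightarrow> 'w \<Rightarrow> real^'n"
  assumes A_bc: "assumptionA_E P Gs G \<sigma> L \<or> assumptionA_F n Gi G L"
    and A_d: "weak_minty G T \<rho> xs"
    and prob: "prob_space M"
    and filt: "filtration (space M) F" and subalg: "\<And>k. subalgebra M (F k)"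
    and step: "\<eta> > 0"
    and init_x: "\<And>\<omega>. \<omega> \<in> space M \<Longrightarrow> x 0 \<omega> = x0"
    and init_xi: "\<And>\<omega>. \<omega> \<in> space M \<Longrightarrow> \<xi> 0 \<omega> = \<xi>0" and xi0_T: "\<xi>0 \<in> T x0"
    and iter: "\<And>k \<omega>. \<omega> \<in> space M \<Longrightarrow> x (Suc k) \<omega> \<in> resolvent \<eta> T (x k \<omega> - \<eta> *\<^sub>R St k \<omega>)"
    and xi_def: "\<And>k \<omega>. \<omega> \<in> space M \<Longrightarrow>
                   \<xi> (Suc k) \<omega> = (1 / \<eta>) *\<^sub>R (x k \<omega> - \<eta> *\<^sub>R St k \<omega> - x (Suc k) \<omega>)"
    and adapt_x: "\<And>k. x k \<in> borel_measurable (F k)"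
    and adapt_xi: "\<And>k. \<xi> k \<in> borel_measurable (F k)"
    and meas_St: "\<And>k. St k \<in> borel_measurable M"
    and int_x: "\<And>k. integrable M (\<lambda>\<omega>. (norm (x k \<omega>))\<^sup>2)"
    and int_xi: "\<And>k. integrable M (\<lambda>\<omega>. (norm (\<xi> k \<omega>))\<^sup>2)"
    and int_St: "\<And>k. integrable M (\<lambda>\<omega>. (norm (St k \<omega>))\<^sup>2)"
    and classB: "classB M F G x St \<tau>"
    and pos: "\<gamma> > 0" "c > 0" "c1 > 0" "c2 > 0"
  shows "(\<forall>k. AE \<omega> in M.
            real_cond_exp M (F k) (Qk G \<eta> \<tau> \<gamma> c1 xs x \<xi> St (Suc k)) \<omega>
            \<le> Qk G \<eta> \<tau> \<gamma> c1 xs x \<xi> St k \<omega>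
              - (1 - 2 * \<eta> / (c1 * \<tau>) - 4 * \<rho> / \<eta> - 2 / c2
                   - 2 * L\<^sup>2 * \<eta> * (c + 4 * \<rho> + 1 / \<gamma> + 2 * \<eta> / c2))
                * (norm (yk G \<eta> x \<xi> k \<omega> - x k \<omega>))\<^sup>2
              - (1 - \<gamma> * \<eta> - (2 * \<eta> / (c1 * \<tau>)
                   + 2 * L\<^sup>2 * \<eta> * (c + 4 * \<rho> + 1 / \<gamma> + 2 * \<eta> / c2)))
                * (norm (yk G \<eta> x \<xi> k \<omega> - x (k - 1) \<omega>))\<^sup>2
              - c * L\<^sup>2 * \<eta> * (norm (x k \<omega> - x (k - 1) \<omega>))\<^sup>2
              + \<eta> * (2 * \<eta> + c1 / \<tau> + c2 * \<eta>)
                * real_cond_exp M (F k) (\<lambda>\<omega>. (norm (errk G x St k \<omega>))\<^sup>2) \<omega>)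
       \<and> (\<forall>k. \<forall>\<omega> \<in> space M.
            Qk G \<eta> \<tau> \<gamma> c1 xs x \<xi> St k \<omega>
            \<ge> 3 / 4 * (norm (yk G \<eta> x \<xi> k \<omega> - xs))\<^sup>2
              + (1 - 2 * \<gamma> * \<eta>) / 2 * (norm (yk G \<eta> x \<xi> k \<omega> - x (k - 1) \<omega>))\<^sup>2
              + (2 * \<eta> / (c1 * \<tau>) - 1 / 2) * (norm (x (k - 1) \<omega> - yprev G \<eta> x \<xi> k \<omega>))\<^sup>2
              - 8 * (1 - \<tau>)\<^sup>2 * \<eta>\<^sup>2 / \<tau>\<^sup>2 * (norm (errprev G x St k \<omega>))\<^sup>2)"
proof -
  have rho: "\<rho> \<ge> 0" and minty: "\<And>a v. v \<in> T a \<Longrightarrow> inner (G a + v) (a - xs) \<ge> - \<rho> * (norm (G a + v))\<^sup>2"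
    using A_d unfolding weak_minty_def by auto
  have lipsq: "\<And>a b. (norm (G a - G b))\<^sup>2 \<le> L\<^sup>2 * (norm (a - b))\<^sup>2"
    using A_bc lip_E lip_F by blast
  have lipa: "\<And>a b. norm (G a - G b) \<le> \<bar>L\<bar> * norm (a - b)" by (rule lip_abs[OF lipsq])
  have contG: "continuous_on UNIV G"
    by (rule lipschitz_on_continuous_on[of "\<bar>L\<bar>"]) (auto simp: lipschitz_on_def dist_norm lipa)
  have Gm[measurable]: "G \<in> borel_measurable borel" by (rule borel_measurable_continuous_onI[OF contG])
  have tau: "0 < \<tau>" "\<tau> \<le> 1" using classB unfolding classB_def by auto
  have cexp: "\<And>k. AE \<omega> in M. \<forall>i. real_cond_exp M (F k) (\<lambda>\<omega>. errk G x St k \<omega> $ i) \<omega> = (1 - \<tau>) * (errprev G x St k \<omega> $ i)"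
    using classB unfolding classB_def by blast
  have fm: "finite_measure M" using prob by (simp add: prob_space_def)
  have xiT: "\<xi> k \<omega> \<in> T (x k \<omega>)" if \<omega>: "\<omega> \<in> space M" for k \<omega>
  proof (cases k)
    case 0 then show ?thesis using init_x init_xi xi0_T \<omega> by simp
  next
    case (Suc j)
    from iter[OF \<omega>, of j] obtain v where v: "v \<in> T (x (Suc j) \<omega>)" "x j \<omega> - \<eta> *\<^sub>R St j \<omega> = x (Suc j) \<omega> + \<eta> *\<^sub>R v"
      unfolding resolvent_def by auto
    have "\<xi> (Suc j) \<omega> = (1 / \<eta>) *\<^sub>R (\<eta> *\<^sub>R v)" using xi_def[OF \<omega>, of j] v(2) by simp
    then have "\<xi> (Suc j) \<omega> = v" using step by simp
    then show ?thesis using v Suc by simp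
  qed
  have part2: "\<forall>k. \<forall>\<omega> \<in> space M.
            Qk G \<eta> \<tau> \<gamma> c1 xs x \<xi> St k \<omega>
            \<ge> 3 / 4 * (norm (yk G \<eta> x \<xi> k \<omega> - xs))\<^sup>2
              + (1 - 2 * \<gamma> * \<eta>) / 2 * (norm (yk G \<eta> x \<xi> k \<omega> - x (k - 1) \<omega>))\<^sup>2
              + (2 * \<eta> / (c1 * \<tau>) - 1 / 2) * (norm (x (k - 1) \<omega> - yprev G \<eta> x \<xi> k \<omega>))\<^sup>2
              - 8 * (1 - \<tau>)\<^sup>2 * \<eta>\<^sup>2 / \<tau>\<^sup>2 * (norm (errprev G x St k \<omega>))\<^sup>2"
    unfolding Qk_def by (intro allI ballI lower_pw[OF tau(1)])
  have filt': "\<And>i j. i \<le> j \<Longrightarrow> sets (F i) \<subseteq> sets (F j)" "\<And>i. space (F i) = space M"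
    using filt unfolding filtration_def by auto
  have subF: "\<And>k. sets (F k) \<subseteq> sets M" using subalg unfolding subalgebra_def by auto
  have measF: "x j \<in> borel_measurable (F k)" "\<xi> j \<in> borel_measurable (F k)" if "j \<le> k" for j k
  proof -
    have sp: "space (F j) = space (F k)" by (simp add: filt'(2))
    show "x j \<in> borel_measurable (F k)" by (rule meas_sub[OF adapt_x[of j] sp filt'(1)[OF that]])
    show "\<xi> j \<in> borel_measurable (F k)" by (rule meas_sub[OF adapt_xi[of j] sp filt'(1)[OF that]])
  qed
  have measM: "x j \<in> borel_measurable M" "\<xi> j \<in> borel_measurable M" for j
    using measurable_from_subalg[OF subalg adapt_x] measurable_from_subalg[OF subalg adapt_xi] by auto
  have sx: "sqi M (x j)" for j using measM int_x by (simp add: sqi_def)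
  have sxi: "sqi M (\<xi> j)" for j using measM int_xi by (simp add: sqi_def)
  have sSt: "sqi M (St j)" for j using meas_St int_St by (simp add: sqi_def)
  have sG: "sqi M (\<lambda>\<omega>. G (x j \<omega>))" for j by (rule sqi_G[OF fm sx lipa]) simp
  have sY: "sqi M (yk G \<eta> x \<xi> j)" for j
    unfolding yk_def[abs_def] by (intro sqi_add sqi_scale sx sxi sG)
  have sYp: "sqi M (yprev G \<eta> x \<xi> j)" for j
    unfolding yprev_def[abs_def] by (cases "j = 0") (simp_all add: sx sY)
  have sE: "sqi M (errk G x St j)" for j
    unfolding errk_def[abs_def] Sk_def by (intro sqi_diff sqi_scale sSt sG)
  have sEp: "sqi M (errprev G x St j)" for j
    unfolding errprev_def[abs_def] by (cases "j = 0") (simp_all add: sE sqi_const[OF fm])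
  have sxs: "sqi M (\<lambda>\<omega>. xs)" by (rule sqi_const[OF fm])
  have part1: "AE \<omega> in M.
            real_cond_exp M (F k) (Qk G \<eta> \<tau> \<gamma> c1 xs x \<xi> St (Suc k)) \<omega>
            \<le> Qk G \<eta> \<tau> \<gamma> c1 xs x \<xi> St k \<omega>
              - (1 - 2 * \<eta> / (c1 * \<tau>) - 4 * \<rho> / \<eta> - 2 / c2
                   - 2 * L\<^sup>2 * \<eta> * (c + 4 * \<rho> + 1 / \<gamma> + 2 * \<eta> / c2))
                * (norm (yk G \<eta> x \<xi> k \<omega> - x k \<omega>))\<^sup>2
              - (1 - \<gamma> * \<eta> - (2 * \<eta> / (c1 * \<tau>)
                   + 2 * L\<^sup>2 * \<eta> * (c + 4 * \<rho> + 1 / \<gamma> + 2 * \<eta> / c2)))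
                * (norm (yk G \<eta> x \<xi> k \<omega> - x (k - 1) \<omega>))\<^sup>2
              - c * L\<^sup>2 * \<eta> * (norm (x k \<omega> - x (k - 1) \<omega>))\<^sup>2
              + \<eta> * (2 * \<eta> + c1 / \<tau> + c2 * \<eta>)
                * real_cond_exp M (F k) (\<lambda>\<omega>. (norm (errk G x St k \<omega>))\<^sup>2) \<omega>" for k
  proof -
    have fms: "finite_measure_subalgebra M (F k)"
      unfolding finite_measure_subalgebra_def finite_measure_subalgebra_axioms_def using fm subalg by auto
    interpret sfs: sigma_finite_subalgebra M "F k"
      by (rule finite_measure_subalgebra_is_sigma_finite[OF fms])
    define Y where "Y = yk G \<eta> x \<xi> k"
    define Yp where "Yp = yprev G \<eta> x \<xi> k"
    define e where "e = errk G x St k"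
    define ep where "ep = errprev G x St k"
    define a1 where "a1 = (1 - 2 * \<eta> / (c1 * \<tau>) - 4 * \<rho> / \<eta> - 2 / c2
                   - 2 * L\<^sup>2 * \<eta> * (c + 4 * \<rho> + 1 / \<gamma> + 2 * \<eta> / c2))"
    define a2 where "a2 = (1 - \<gamma> * \<eta> - (2 * \<eta> / (c1 * \<tau>)
                   + 2 * L\<^sup>2 * \<eta> * (c + 4 * \<rho> + 1 / \<gamma> + 2 * \<eta> / c2)))"
    define Cc where "Cc = \<eta> * (2 * \<eta> + c1 / \<tau> + c2 * \<eta>)"
    define Rf where "Rf = (\<lambda>\<omega>. (norm (Y \<omega> - xs))\<^sup>2 + (1-\<gamma>*\<eta>) * (norm (Y \<omega> - x (k - 1) \<omega>))\<^sup>2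
       + (2*\<eta>/(c1*\<tau>)) * (norm (x (k - 1) \<omega> - Yp \<omega>))\<^sup>2
       - a1 * (norm (Y \<omega> - x k \<omega>))\<^sup>2 - a2 * (norm (Y \<omega> - x (k - 1) \<omega>))\<^sup>2
       - c*L\<^sup>2*\<eta>*(norm (x k \<omega> - x (k - 1) \<omega>))\<^sup>2)"
    define If where "If = (\<lambda>\<omega>. inner (e \<omega>) (xs - Yp \<omega>))"
    define Ef where "Ef = (\<lambda>\<omega>. (norm (e \<omega>))\<^sup>2)"
    define B where "B = (\<lambda>\<omega>. Rf \<omega> + (2*\<eta>/\<tau>) * If \<omega> + Cc * Ef \<omega>)"
    have pw: "Qk G \<eta> \<tau> \<gamma> c1 xs x \<xi> St (Suc k) \<omega> \<le> B \<omega>" if \<omega>: "\<omega> \<in> space M" for \<omega>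
    proof -
      define w where "w = G (x k \<omega>) + \<xi> k \<omega>"
      define d where "d = G (x k \<omega>) - G (x (k - 1) \<omega>)"
      have w_eq: "w = (1/\<eta>) *\<^sub>R (Y \<omega> - x k \<omega>) + d"
        using step unfolding w_def d_def Y_def yk_def by simp
      have mw: "inner w (x k \<omega> - xs) \<ge> - \<rho> * (norm w)\<^sup>2"
        unfolding w_def by (rule minty[OF xiT[OF \<omega>]])
      have ld: "(norm d)\<^sup>2 \<le> L\<^sup>2 * (norm (x k \<omega> - x (k - 1) \<omega>))\<^sup>2" unfolding d_def by (rule lipsq)
      have exi: "\<eta> *\<^sub>R \<xi> (Suc k) \<omega> = x k \<omega> - \<eta> *\<^sub>R St k \<omega> - x (Suc k) \<omega>"
        using xi_def[OF \<omega>, of k] step by simp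
      have "yk G \<eta> x \<xi> (Suc k) \<omega> = x (Suc k) \<omega> + \<eta> *\<^sub>R G (x k \<omega>) + \<eta> *\<^sub>R \<xi> (Suc k) \<omega>"
        by (simp add: yk_def scaleR_add_right)
      also have "\<dots> = x k \<omega> + \<eta> *\<^sub>R G (x k \<omega>) - \<eta> *\<^sub>R St k \<omega>"
        unfolding exi by (simp add: algebra_simps)
      also have "\<dots> = Y \<omega> - \<eta> *\<^sub>R w - \<eta> *\<^sub>R e \<omega>"
        unfolding Y_def w_def e_def yk_def errk_def Sk_def scaleR_2 by (simp add: algebra_simps)
      finally have yS: "yk G \<eta> x \<xi> (Suc k) \<omega> = Y \<omega> - \<eta> *\<^sub>R w - \<eta> *\<^sub>R e \<omega>" .
      have Q1: "Qk G \<eta> \<tau> \<gamma> c1 xs x \<xi> St (Suc k) \<omega> =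
          (norm (Y \<omega> - \<eta> *\<^sub>R w - \<eta> *\<^sub>R e \<omega> - xs))\<^sup>2 + (1 - \<gamma>*\<eta>) * (norm (Y \<omega> - \<eta> *\<^sub>R w - \<eta> *\<^sub>R e \<omega> - x k \<omega>))\<^sup>2
       + (2*\<eta>/(c1*\<tau>)) * (norm (x k \<omega> - Y \<omega>))\<^sup>2 + (2*\<eta>*(1-\<tau>)/\<tau>) * inner (e \<omega>) (xs - Y \<omega>)"
        unfolding Qk_def yS[symmetric] by (simp add: Y_def e_def yprev_def errprev_def)
      show ?thesis
        unfolding Q1 B_def Rf_def If_def Ef_def a1_def a2_def Cc_def
        by (rule descent_pw[OF step tau(1) pos(3) pos(4) pos(1) pos(2) rho w_eq mw ld])
    qed
    have k1: "k - 1 \<le> k" by simp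
    have k2: "k - 1 - 1 \<le> k" by simp
    have k0: "0 \<le> k" by simp
    note mF[measurable] = measF[OF order_refl] measF[OF k1] measF[OF k2] measF[OF k0]
    have YF: "Y \<in> borel_measurable (F k)" "Yp \<in> borel_measurable (F k)"
      unfolding Y_def Yp_def yk_def[abs_def] yprev_def[abs_def] by measurable
    have xF: "x k \<in> borel_measurable (F k)" "x (k - 1) \<in> borel_measurable (F k)"
      using measF by auto
    have RfF: "Rf \<in> borel_measurable (F k)"
      unfolding Rf_def using YF xF by measurable
    have nd: "integrable M (\<lambda>\<omega>. (norm (f \<omega> - g \<omega>))\<^sup>2)" if "sqi M f" "sqi M g" for f g :: "'w \<Rightarrow> real^'n"
      by (rule sqi_int[OF sqi_diff[OF that]])
    have sY': "sqi M Y" "sqi M Yp" "sqi M e" "sqi M ep" unfolding Y_def Yp_def e_def ep_def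
      by (rule sY sYp sE sEp)+
    have iRf: "integrable M Rf"
      unfolding Rf_def
      by (intro Bochner_Integration.integrable_diff Bochner_Integration.integrable_add
          Bochner_Integration.integrable_mult_right nd sY' sx sxs)
    have iIf: "integrable M If"
      unfolding If_def by (intro sqi_inner sqi_diff sY' sxs)
    have iEf: "integrable M Ef"
      unfolding Ef_def by (rule sqi_int[OF sY'(3)])
    have iQ: "integrable M (Qk G \<eta> \<tau> \<gamma> c1 xs x \<xi> St (Suc k))"
      unfolding Qk_def[abs_def]
      by (intro Bochner_Integration.integrable_add Bochner_Integration.integrable_mult_right nd
          sqi_inner sqi_diff sY sYp sEp sx sxs)
    have iB: "integrable M B" unfolding B_def using iRf iIf iEf by auto
    have ae1: "AE \<omega> in M. real_cond_exp M (F k) (Qk G \<eta> \<tau> \<gamma> c1 xs x \<xi> St (Suc k)) \<omega> \<le> real_cond_exp M (F k) B \<omega>"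
      by (rule sfs.real_cond_exp_mono[OF AE_I2[OF pw] iQ iB])
    have ae2: "AE \<omega> in M. real_cond_exp M (F k) B \<omega> = Rf \<omega> + (2*\<eta>/\<tau>) * real_cond_exp M (F k) If \<omega> + Cc * real_cond_exp M (F k) Ef \<omega>"
    proof -
      have a: "AE \<omega> in M. real_cond_exp M (F k) B \<omega> = real_cond_exp M (F k) (\<lambda>\<omega>. Rf \<omega> + (2*\<eta>/\<tau>) * If \<omega>) \<omega>
          + real_cond_exp M (F k) (\<lambda>\<omega>. Cc * Ef \<omega>) \<omega>"
        unfolding B_def by (rule sfs.real_cond_exp_add) (use iRf iIf iEf in auto)
      have b: "AE \<omega> in M. real_cond_exp M (F k) (\<lambda>\<omega>. Rf \<omega> + (2*\<eta>/\<tau>) * If \<omega>) \<omega>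
          = real_cond_exp M (F k) Rf \<omega> + real_cond_exp M (F k) (\<lambda>\<omega>. (2*\<eta>/\<tau>) * If \<omega>) \<omega>"
        by (rule sfs.real_cond_exp_add) (use iRf iIf in auto)
      have c: "AE \<omega> in M. real_cond_exp M (F k) (\<lambda>\<omega>. (2*\<eta>/\<tau>) * If \<omega>) \<omega> = (2*\<eta>/\<tau>) * real_cond_exp M (F k) If \<omega>"
        by (rule sfs.real_cond_exp_cmult[OF iIf])
      have d: "AE \<omega> in M. real_cond_exp M (F k) (\<lambda>\<omega>. Cc * Ef \<omega>) \<omega> = Cc * real_cond_exp M (F k) Ef \<omega>"
        by (rule sfs.real_cond_exp_cmult[OF iEf])
      have e': "AE \<omega> in M. real_cond_exp M (F k) Rf \<omega> = Rf \<omega>"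
        by (rule sfs.real_cond_exp_F_meas[OF iRf RfF])
      from a b c d e' show ?thesis by eventually_elim simp
    qed
    have ae3: "AE \<omega> in M. real_cond_exp M (F k) If \<omega> = (1 - \<tau>) * inner (ep \<omega>) (xs - Yp \<omega>)"
    proof -
      have Ifs: "If = (\<lambda>\<omega>. \<Sum>i\<in>UNIV. (xs - Yp \<omega>) $ i * e \<omega> $ i)"
        unfolding If_def by (rule ext) (simp add: inner_vec_def mult.commute)
      have dF: "(\<lambda>\<omega>. xs - Yp \<omega>) \<in> borel_measurable (F k)" using YF by measurable
      have s1: "AE \<omega> in M. real_cond_exp M (F k) If \<omega> = (\<Sum>i\<in>UNIV. real_cond_exp M (F k) (\<lambda>\<omega>. (xs - Yp \<omega>) $ i * e \<omega> $ i) \<omega>)"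
        unfolding Ifs by (rule sfs.real_cond_exp_sum) (rule sqi_comp_prod[OF sqi_diff[OF sxs sY'(2)] sY'(3)])
      have s2: "AE \<omega> in M. \<forall>i. real_cond_exp M (F k) (\<lambda>\<omega>. (xs - Yp \<omega>) $ i * e \<omega> $ i) \<omega> = (xs - Yp \<omega>) $ i * real_cond_exp M (F k) (\<lambda>\<omega>. e \<omega> $ i) \<omega>"
      proof (rule AE_all_countable[THEN iffD2], rule allI)
        fix i
        show "AE \<omega> in M. real_cond_exp M (F k) (\<lambda>\<omega>. (xs - Yp \<omega>) $ i * e \<omega> $ i) \<omega> = (xs - Yp \<omega>) $ i * real_cond_exp M (F k) (\<lambda>\<omega>. e \<omega> $ i) \<omega>"
          by (rule sfs.real_cond_exp_mult[OF meas_nth[OF dF] meas_nth[OF sqi_meas[OF sY'(3)]] sqi_comp_prod[OF sqi_diff[OF sxs sY'(2)] sY'(3)]])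
      qed
      have s3: "AE \<omega> in M. \<forall>i. real_cond_exp M (F k) (\<lambda>\<omega>. e \<omega> $ i) \<omega> = (1 - \<tau>) * (ep \<omega> $ i)"
        unfolding e_def ep_def by (rule cexp)
      from s1 s2 s3 show ?thesis
      proof eventually_elim
        case (elim \<omega>)
        then show ?case by (simp add: inner_vec_def sum_distrib_left mult.commute mult.left_commute)
      qed
    qed
    show ?thesis
    proof (rule AE_mp[OF AE_conj_iff[THEN iffD2, OF conjI[OF ae1 AE_conj_iff[THEN iffD2, OF conjI[OF ae2 ae3]]]]], rule AE_I2, intro impI)
      fix \<omega> assume h: "real_cond_exp M (F k) (Qk G \<eta> \<tau> \<gamma> c1 xs x \<xi> St (Suc k)) \<omega> \<le> real_cond_exp M (F k) B \<omega> \<and>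
        real_cond_exp M (F k) B \<omega> = Rf \<omega> + (2*\<eta>/\<tau>) * real_cond_exp M (F k) If \<omega> + Cc * real_cond_exp M (F k) Ef \<omega> \<and>
        real_cond_exp M (F k) If \<omega> = (1 - \<tau>) * inner (ep \<omega>) (xs - Yp \<omega>)"
      have "Rf \<omega> + (2*\<eta>/\<tau>) * ((1 - \<tau>) * inner (ep \<omega>) (xs - Yp \<omega>)) + Cc * real_cond_exp M (F k) Ef \<omega>
        = Qk G \<eta> \<tau> \<gamma> c1 xs x \<xi> St k \<omega> - a1 * (norm (Y \<omega> - x k \<omega>))\<^sup>2 - a2 * (norm (Y \<omega> - x (k - 1) \<omega>))\<^sup>2
          - c * L\<^sup>2 * \<eta> * (norm (x k \<omega> - x (k - 1) \<omega>))\<^sup>2 + Cc * real_cond_exp M (F k) Ef \<omega>"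
      proof -
        have eqI: "(2*\<eta>/\<tau>)*((1-\<tau>)*I) = (2*\<eta>*(1-\<tau>)/\<tau>)*I" for I :: real by simp
        show ?thesis unfolding Rf_def Qk_def Y_def Yp_def ep_def
          using eqI[of "inner (errprev G x St k \<omega>) (xs - yprev G \<eta> x \<xi> k \<omega>)"] by linarith
      qed
      then show "real_cond_exp M (F k) (Qk G \<eta> \<tau> \<gamma> c1 xs x \<xi> St (Suc k)) \<omega>
            \<le> Qk G \<eta> \<tau> \<gamma> c1 xs x \<xi> St k \<omega>
              - (1 - 2 * \<eta> / (c1 * \<tau>) - 4 * \<rho> / \<eta> - 2 / c2
                   - 2 * L\<^sup>2 * \<eta> * (c + 4 * \<rho> + 1 / \<gamma> + 2 * \<eta> / c2))
                * (norm (yk G \<eta> x \<xi> k \<omega> - x k \<omega>))\<^sup>2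
              - (1 - \<gamma> * \<eta> - (2 * \<eta> / (c1 * \<tau>)
                   + 2 * L\<^sup>2 * \<eta> * (c + 4 * \<rho> + 1 / \<gamma> + 2 * \<eta> / c2)))
                * (norm (yk G \<eta> x \<xi> k \<omega> - x (k - 1) \<omega>))\<^sup>2
              - c * L\<^sup>2 * \<eta> * (norm (x k \<omega> - x (k - 1) \<omega>))\<^sup>2
              + \<eta> * (2 * \<eta> + c1 / \<tau> + c2 * \<eta>)
                * real_cond_exp M (F k) (\<lambda>\<omega>. (norm (errk G x St k \<omega>))\<^sup>2) \<omega>"
        using conjunct1[OF h] conjunct1[OF conjunct2[OF h], unfolded conjunct2[OF conjunct2[OF h]]]
        unfolding a1_def[symmetric] a2_def[symmetric] Cc_def[symmetric] Y_def[symmetric] Ef_def e_def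
        by linarith
    qed
  qed
  show ?thesis using part1 part2 by blast
qed

end
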